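(* If $\mathcal{H}$ is a complex Hilbert space with $\dim \mathcal{H} = 3$, then every partial isometry $T \in B(\mathcal{H})$ is a complex symmetric operator.
   Context: A partial isometry is an operator $T$ such that $T^*T$ is an orthogonal projection. A conjugation on $\mathcal{H}$ is a conjugate-linear map $C:\mathcal{H}\to\mathcal{H}$ that is isometric and involutive ($C^2=I$). An operator $T$ is complex symmetric if $T = CT^*C$ for some conjugation $C$. *)

theory Defs
  imports "HOL-Analysis.Analysis"
begin

text \<open>Operators on the n-dimensional complex Hilbert space complex^n are represented by
  matrices (every operator on a finite-dimensional space is bounded and given by a matrix
  with respect to the standard orthonormal basis).\<close>

definition adjoint_mat :: "complex ^ 'n ^ 'm \<Rightarrow> complex ^ 'm ^ 'n" where
  "adjoint_mat A = (\<chi> i j. cnj (A $ j $ i))"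

definition orthogonal_projection_mat :: "complex ^ 'n ^ 'n \<Rightarrow> bool" where
  "orthogonal_projection_mat P \<longleftrightarrow> P ** P = P \<and> adjoint_mat P = P"

definition partial_isometry :: "complex ^ 'n ^ 'n \<Rightarrow> bool" where
  "partial_isometry T \<longleftrightarrow> orthogonal_projection_mat (adjoint_mat T ** T)"

definition conjugation :: "(complex ^ 'n \<Rightarrow> complex ^ 'n) \<Rightarrow> bool" where
  "conjugation C \<longleftrightarrow>
     (\<forall>x y. C (x + y) = C x + C y) \<and>
     (\<forall>a x. C (a *s x) = cnj a *s C x) \<and>
     (\<forall>x. norm (C x) = norm x) \<and>
     (\<forall>x. C (C x) = x)"

definition complex_symmetric :: "complex ^ 'n ^ 'n \<Rightarrow> bool" where
  "complex_symmetric T \<longleftrightarrow>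
     (\<exists>C. conjugation C \<and> (\<forall>x. T *v x = C (adjoint_mat T *v C x)))"

end

theory Submission
  imports Defs "HOL-Computational_Algebra.Fundamental_Theorem_Algebra"
begin


definition cinner :: "complex^'n \<Rightarrow> complex^'n \<Rightarrow> complex" where
  "cinner x y = (\<Sum>i\<in>UNIV. x$i * cnj (y$i))"

definition cvec :: "complex^'n \<Rightarrow> complex^'n" where
  "cvec x = (\<chi> i. cnj (x$i))"

definition cmat :: "complex^'n^'m \<Rightarrow> complex^'n^'m" where
  "cmat A = (\<chi> i j. cnj (A$i$j))"

lemma adjoint_mat_cmat: "adjoint_mat A = transpose (cmat A)"
  by (simp add: adjoint_mat_def transpose_def cmat_def)

lemma cinner_adj: "cinner (A *v x) y = cinner x (adjoint_mat A *v y)"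
  unfolding cinner_def adjoint_mat_def matrix_vector_mult_def
  apply (simp add: sum_distrib_left sum_distrib_right mult_ac)
  apply (subst sum.swap) by (simp add: mult_ac)

lemma cinner_self: "cinner x x = of_real (\<Sum>i\<in>UNIV. (cmod (x$i))^2)"
  unfolding cinner_def by (simp add: complex_norm_square[symmetric])

lemma norm_cinner: "norm x = sqrt (Re (cinner x x))"
  unfolding cinner_self norm_vec_def L2_set_def by simp

lemma cinner_self_eq_0: "cinner x x = 0 \<Longrightarrow> x = 0"
proof -
  assume "cinner x x = 0"
  hence "(\<Sum>i\<in>UNIV. (cmod (x$i))^2) = 0" unfolding cinner_self by (metis of_real_eq_0_iff)
  hence "\<forall>i\<in>UNIV. (cmod (x$i))^2 = 0" by (subst (asm) sum_nonneg_eq_0_iff) auto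
  thus ?thesis by (simp add: vec_eq_iff)
qed

lemma cinner_ext: "(\<And>y. cinner a y = cinner b y) \<Longrightarrow> a = b"
proof -
  assume h: "\<And>y. cinner a y = cinner b y"
  have "cinner (a - b) (a - b) = 0"
    using h[of "a-b"] unfolding cinner_def
    by (simp add: algebra_simps sum_subtractf sum.distrib)
  hence "a - b = 0" by (rule cinner_self_eq_0)
  thus ?thesis by simp
qed

lemma cvec_add: "cvec (x + y) = cvec x + cvec y"
  by (simp add: cvec_def vec_eq_iff)
lemma cvec_scale: "cvec (a *s x) = cnj a *s cvec x"
  by (simp add: cvec_def vec_eq_iff)
lemma cvec_cvec[simp]: "cvec (cvec x) = x"
  by (simp add: cvec_def vec_eq_iff)
lemma cvec_mult: "cvec (A *v x) = cmat A *v cvec x"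
  by (simp add: cvec_def cmat_def vec_eq_iff matrix_vector_mult_def)
lemma cmat_mult: "cmat ((A::complex^'n^'m) ** B) = cmat A ** cmat B"
  by (simp add: cmat_def vec_eq_iff matrix_matrix_mult_def)
lemma mv_scale: "(A::complex^'n^'m) *v (c *s x) = c *s (A *v x)"
  by (simp add: vec_eq_iff matrix_vector_mult_def sum_distrib_left mult_ac)
lemma cinner_cvec: "cinner (cvec x) (cvec y) = cnj (cinner x y)"
  by (simp add: cinner_def cvec_def)

lemma final_W:
  fixes T W :: "complex^'n^'n"
  assumes WU: "W ** adjoint_mat W = mat 1" and WS: "transpose W = W"
    and TWS: "transpose (T ** W) = T ** W"
  shows "complex_symmetric T"
proof -
  define C where "C x = W *v cvec x" for x :: "complex^'n"
  have WU': "adjoint_mat W ** W = mat 1" using WU matrix_left_right_inverse by blast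
  have adjW: "adjoint_mat W = cmat W"
  proof -
    have "W$j$i = W$i$j" for i j using WS by (metis transpose_def vec_lambda_beta)
    thus ?thesis by (simp add: adjoint_mat_def cmat_def vec_eq_iff)
  qed
  have nrm: "norm (C x) = norm x" for x
  proof -
    have "cinner (C x) (C x) = cinner (cvec x) (cvec x)"
      unfolding C_def cinner_adj matrix_vector_mul_assoc WU' by simp
    also have "\<dots> = cinner x x" unfolding cinner_self by (simp add: cvec_def)
    finally show ?thesis by (simp add: norm_cinner)
  qed
  have CC: "C (C x) = x" for x
    unfolding C_def cvec_mult cvec_cvec matrix_vector_mul_assoc adjW[symmetric] WU by simp
  have conj: "conjugation C"
    unfolding conjugation_def
    by (auto simp: C_def cvec_add cvec_scale matrix_vector_right_distrib mv_scale nrm[unfolded C_def]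
        CC[unfolded C_def])
  have key: "T ** W ** cmat W = T"
    by (metis WU adjW matrix_mul_assoc matrix_mul_rid)
  have "W ** transpose T = T ** W"
    using TWS by (simp add: matrix_transpose_mul WS)
  hence "W ** cmat (adjoint_mat T) ** cmat W = T"
    using key by (simp add: adjoint_mat_cmat cmat_def transpose_def)
  hence "\<forall>x. T *v x = C (adjoint_mat T *v C x)"
    unfolding C_def cvec_mult cvec_cvec matrix_vector_mul_assoc cmat_mult by (simp add: matrix_mul_assoc)
  thus ?thesis using conj unfolding complex_symmetric_def by blast
qed


definition outer :: "complex^'n \<Rightarrow> complex^'m \<Rightarrow> complex^'m^'n" where
  "outer u v = (\<chi> i j. u$i * cnj (v$j))"
definition outerT :: "complex^'n \<Rightarrow> complex^'m \<Rightarrow> complex^'m^'n" where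
  "outerT u v = (\<chi> i j. u$i * v$j)"
definition diagm :: "('n \<Rightarrow> complex) \<Rightarrow> complex^'n^'n" where
  "diagm d = (\<chi> i j. if i = j then d i else 0)"
definition cols :: "('n \<Rightarrow> complex^'m) \<Rightarrow> complex^'n^'m" where
  "cols f = (\<chi> i j. f j $ i)"
definition orthonormal :: "('n \<Rightarrow> complex^'n) \<Rightarrow> bool" where
  "orthonormal f \<longleftrightarrow> (\<forall>j k. cinner (f k) (f j) = (if j = k then 1 else 0))"

lemma ifm1: "(if P then a else 0) * (b::complex) = (if P then a * b else 0)" by simp
lemma ifm2: "(b::complex) * (if P then a else 0) = (if P then b * a else 0)" by simp
lemma cmat_adjoint: "cmat (adjoint_mat A) = transpose A"
  by (simp add: adjoint_mat_def cmat_def transpose_def vec_eq_iff)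

lemma outer_mv: "outer u v *v x = cinner x v *s u"
  by (simp add: outer_def cinner_def vec_eq_iff matrix_vector_mult_def sum_distrib_left mult_ac)
lemma mult_outer: "A ** outer u v = outer (A *v u) v"
  by (simp add: outer_def vec_eq_iff matrix_vector_mult_def matrix_matrix_mult_def sum_distrib_right sum_distrib_left mult_ac)
lemma outer_mult: "outer u v ** A = outer u (adjoint_mat A *v v)"
  by (simp add: outer_def adjoint_mat_def vec_eq_iff matrix_vector_mult_def matrix_matrix_mult_def
      sum_distrib_left mult_ac)
lemma outerT_sym: "transpose (outerT u u) = outerT u u"
  by (simp add: outerT_def transpose_def vec_eq_iff mult_ac)
lemma outer_W: assumes "transpose W = W" shows "outer u a ** W = outerT u (W *v cvec a)"
proof -
  have s: "W$j$k = W$k$j" for j k using assms by (metis transpose_def vec_lambda_beta)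
  show ?thesis
    by (simp add: outer_def outerT_def cvec_def vec_eq_iff matrix_vector_mult_def matrix_matrix_mult_def
      sum_distrib_left mult_ac s[of _ "_::'a"])
qed

lemma diagm_mult: "diagm d ** diagm e = diagm (\<lambda>i. d i * e i)"
  by (simp add: diagm_def vec_eq_iff matrix_matrix_mult_def ifm1 ifm2)
lemma diagm_transpose: "transpose (diagm d) = diagm d"
  by (simp add: diagm_def transpose_def vec_eq_iff)
lemma diagm_cmat: "cmat (diagm d) = diagm (\<lambda>i. cnj (d i))"
  by (simp add: diagm_def cmat_def vec_eq_iff)
lemma diagm_mv: "diagm d *v x = (\<chi> i. d i * x$i)"
  by (simp add: diagm_def vec_eq_iff matrix_vector_mult_def ifm1 ifm2)
lemma diagm_one: "(\<And>i. d i = 1) \<Longrightarrow> diagm d = mat 1"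
  by (simp add: diagm_def mat_def vec_eq_iff)

lemma adjoint_mult: "adjoint_mat (A ** B) = adjoint_mat B ** adjoint_mat A"
  by (simp add: adjoint_mat_cmat cmat_mult matrix_transpose_mul)
lemma adjoint_transpose: "adjoint_mat (transpose A) = cmat A"
  by (simp add: adjoint_mat_cmat cmat_def transpose_def vec_eq_iff)
lemma adjoint_adjoint[simp]: "adjoint_mat (adjoint_mat A) = A"
  by (simp add: adjoint_mat_def vec_eq_iff)
lemma cmat_cmat[simp]: "cmat (cmat A) = A"
  by (simp add: cmat_def vec_eq_iff)

lemma unitary_right: "adjoint_mat (U::complex^'n^'n) ** U = mat 1 \<Longrightarrow> U ** adjoint_mat U = mat 1"
  using matrix_left_right_inverse by blast
lemma unitary_cinner: "adjoint_mat U ** U = mat 1 \<Longrightarrow> cinner (U *v x) (U *v y) = cinner x y"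
  by (simp add: cinner_adj matrix_vector_mul_assoc)

lemma cols_mv_axis: "cols f *v axis k 1 = f k"
  by (simp add: cols_def axis_def vec_eq_iff matrix_vector_mult_def if_distrib cong: if_cong)

lemma orthonormal_unitary: "orthonormal f \<Longrightarrow> adjoint_mat (cols f) ** cols f = mat 1"
  unfolding orthonormal_def
  by (simp add: cols_def adjoint_mat_def matrix_matrix_mult_def cinner_def mat_def vec_eq_iff mult_ac)

lemma eig_abs:
  assumes U: "adjoint_mat U ** U = mat 1" and f: "cinner v v = 1" and e: "U *v v = l *s v"
  shows "l * cnj l = 1"
proof -
  have "cinner (U *v v) (U *v v) = 1" using unitary_cinner[OF U] f by simp
  hence "l * cnj l * cinner v v = 1" unfolding e by (simp add: cinner_def sum_distrib_left mult_ac)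
  thus ?thesis using f by simp
qed

lemma W_lemma:
  fixes U :: "complex^'n^'n"
  assumes U: "adjoint_mat U ** U = mat 1" and f: "orthonormal f"
    and e: "\<And>k. U *v f k = l k *s f k"
  shows "\<exists>W. W ** adjoint_mat W = mat 1 \<and> transpose W = W \<and> transpose (U ** W) = U ** W
     \<and> W *v cvec a = U *v a"
proof -
  define Q where "Q = cols f"
  have QU: "adjoint_mat Q ** Q = mat 1" using orthonormal_unitary[OF f] Q_def by simp
  have QU': "Q ** adjoint_mat Q = mat 1" using unitary_right[OF QU] .
  have labs: "l k * cnj (l k) = 1" for k
    using eig_abs[OF U _ e] f unfolding orthonormal_def by auto
  define D where "D = diagm l"
  have UQ: "U ** Q = Q ** D"
  proof -
    have 1: "(U ** cols f)$i$k = (U *v f k)$i" for i k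
      by (simp add: matrix_matrix_mult_def matrix_vector_mult_def cols_def)
    have 2: "(cols f ** diagm l)$i$k = l k * f k $ i" for i k
      by (simp add: matrix_matrix_mult_def cols_def diagm_def ifm2)
    show ?thesis unfolding Q_def D_def vec_eq_iff using 1 2 e by simp
  qed
  have Ueq: "U = Q ** D ** adjoint_mat Q"
  proof -
    have "U = U ** (Q ** adjoint_mat Q)" using QU' by simp
    also have "\<dots> = Q ** D ** adjoint_mat Q" using UQ by (simp only: matrix_mul_assoc)
    finally show ?thesis .
  qed
  define z where "z = adjoint_mat Q *v a"
  define c where "c k = (if z$k = 0 then 1 else l k * z$k / cnj (z$k))" for k
  have cabs: "c k * cnj (c k) = 1" for k
  proof (cases "z$k = 0")
    case True thus ?thesis by (simp add: c_def)
  next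
    case False
    have "c k * cnj (c k) = (l k * cnj (l k)) * (z$k * cnj (z$k)) / (cnj (z$k) * z$k)"
      using False by (simp add: c_def)
    thus ?thesis using labs False by (simp add: mult.commute)
  qed
  have cz: "c k * cnj (z$k) = l k * z$k" for k
    by (cases "z$k = 0") (auto simp: c_def)
  define E where "E = diagm c"
  define W where "W = Q ** E ** transpose Q"
  have TQ: "transpose Q ** cmat Q = mat 1"
  proof -
    have "transpose (adjoint_mat Q ** Q) = transpose (mat 1 :: complex^'n^'n)" using QU by simp
    thus ?thesis by (simp add: matrix_transpose_mul adjoint_mat_cmat transpose_mat)
  qed
  have EE: "E ** cmat E = mat 1"
    unfolding E_def diagm_cmat diagm_mult using cabs by (simp add: diagm_one)
  have "W ** adjoint_mat W = Q ** E ** (transpose Q ** cmat Q) ** cmat E ** adjoint_mat Q"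
    unfolding W_def adjoint_mult adjoint_transpose
    by (simp only: matrix_mul_assoc adjoint_mat_cmat E_def diagm_cmat diagm_transpose)
  also have "\<dots> = Q ** (E ** cmat E) ** adjoint_mat Q" unfolding TQ by (simp only: matrix_mul_rid matrix_mul_assoc)
  also have "\<dots> = mat 1" using EE QU' by simp
  finally have WU: "W ** adjoint_mat W = mat 1" .
  have WS: "transpose W = W"
    unfolding W_def by (simp only: matrix_transpose_mul E_def diagm_transpose matrix_mul_assoc transpose_transpose)
  have "U ** W = Q ** D ** (adjoint_mat Q ** Q) ** E ** transpose Q"
    unfolding Ueq W_def by (simp only: matrix_mul_assoc)
  also have "\<dots> = Q ** (D ** E) ** transpose Q" unfolding QU by (simp only: matrix_mul_rid matrix_mul_assoc)
  finally have "U ** W = Q ** (D ** E) ** transpose Q" .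
  hence UWS: "transpose (U ** W) = U ** W"
    by (simp only: matrix_transpose_mul D_def E_def diagm_mult diagm_transpose matrix_mul_assoc transpose_transpose)
  have TQa: "transpose Q *v cvec a = cvec z"
    unfolding z_def cvec_mult cmat_adjoint ..
  have "W *v cvec a = Q *v (E *v cvec z)"
    unfolding W_def by (simp only: matrix_vector_mul_assoc[symmetric] TQa)
  also have "E *v cvec z = D *v z"
    unfolding E_def D_def diagm_mv using cz by (simp add: cvec_def vec_eq_iff)
  also have "Q *v (D *v z) = U *v a"
    unfolding Ueq z_def by (simp only: matrix_vector_mul_assoc matrix_mul_assoc)
  finally show ?thesis using WU WS UWS by blast
qed



lemma cinner_conj: "cinner x y = cnj (cinner y x)"
  by (simp add: cinner_def mult.commute)
lemma cinner_scale_left: "cinner (c *s x) y = c * cinner x y"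
  by (simp add: cinner_def sum_distrib_left mult_ac)
lemma cinner_scale_right: "cinner x (c *s y) = cnj c * cinner x y"
  by (simp add: cinner_def sum_distrib_left mult_ac)
lemma cinner_add_left: "cinner (x + y) z = cinner x z + cinner y z"
  by (simp add: cinner_def sum.distrib algebra_simps)
lemma cinner_add_right: "cinner z (x + y) = cinner z x + cinner z y"
  by (simp add: cinner_def sum.distrib algebra_simps)
lemma cinner_diff_left: "cinner (x - y) z = cinner x z - cinner y z"
  by (simp add: cinner_def sum_subtractf algebra_simps)
lemma cinner_diff_right: "cinner z (x - y) = cinner z x - cinner z y"
  by (simp add: cinner_def sum_subtractf algebra_simps)
lemma cinner_zero_left[simp]: "cinner 0 x = 0" by (simp add: cinner_def)
lemma cinner_zero_right[simp]: "cinner x 0 = 0" by (simp add: cinner_def)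
lemma cinner_sum_left: "cinner (\<Sum>k\<in>S. g k) z = (\<Sum>k\<in>S. cinner (g k) z)"
  by (simp add: cinner_def sum_distrib_right) (subst sum.swap, simp)
lemmas cinner_simps = cinner_scale_left cinner_scale_right cinner_add_left cinner_add_right
  cinner_diff_left cinner_diff_right

lemma cinner_self_real: "cinner x x = complex_of_real ((norm x)^2)"
proof -
  have "Re (cinner x x) \<ge> 0" unfolding cinner_self by (simp add: sum_nonneg)
  moreover have "Im (cinner x x) = 0" unfolding cinner_self by simp
  ultimately show ?thesis unfolding norm_cinner by (simp add: complex_eq_iff)
qed

lemma normalize:
  fixes x :: "complex^'n"
  assumes "x \<noteq> 0"
  shows "cinner (complex_of_real (1 / norm x) *s x) (complex_of_real (1 / norm x) *s x) = 1"
proof -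
  have "norm x \<noteq> 0" using assms by simp
  thus ?thesis
    unfolding cinner_scale_left cinner_scale_right
    by (simp add: cinner_self_real power2_eq_square)
qed

lemma mv_sum: "(A::complex^'n^'m) *v (\<Sum>k\<in>S. g k) = (\<Sum>k\<in>S. A *v g k)"
  by (induction S rule: infinite_finite_induct) (auto simp: matrix_vector_right_distrib)

lemma expand:
  fixes f :: "'n \<Rightarrow> complex^'n"
  assumes f: "orthonormal f"
  shows "x = (\<Sum>k\<in>UNIV. cinner x (f k) *s f k)"
proof -
  have QU': "cols f ** adjoint_mat (cols f) = mat 1"
    using unitary_right[OF orthonormal_unitary[OF f]] .
  have "x = cols f *v (adjoint_mat (cols f) *v x)"
    by (simp add: matrix_vector_mul_assoc QU')
  also have "\<dots> = (\<Sum>k\<in>UNIV. cinner x (f k) *s f k)"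
    by (simp add: cols_def adjoint_mat_def matrix_vector_mult_def cinner_def vec_eq_iff sum_component
        mult_ac)
  finally show ?thesis .
qed

lemma expand_zero:
  assumes f: "orthonormal f" and h: "\<And>k. cinner x (f k) = 0"
  shows "x = 0"
  using expand[OF f, of x] h by simp

lemma mat_eq_basis:
  fixes A B :: "complex^'n^'n"
  assumes f: "orthonormal f" and h: "\<And>k. A *v f k = B *v f k"
  shows "A = B"
proof (subst matrix_eq, intro allI)
  fix x
  have "A *v x = (\<Sum>k\<in>UNIV. cinner x (f k) *s (A *v f k))"
    by (subst expand[OF f, of x]) (simp add: mv_sum mv_scale)
  also have "\<dots> = (\<Sum>k\<in>UNIV. cinner x (f k) *s (B *v f k))" using h by simp
  also have "\<dots> = B *v x"
    by (subst (2) expand[OF f, of x]) (simp add: mv_sum mv_scale)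
  finally show "A *v x = B *v x" .
qed



definition crossc :: "complex^3 \<Rightarrow> complex^3 \<Rightarrow> complex^3" where
  "crossc u v = vector [u$2* v$3 - u$3* v$2, u$3* v$1 - u$1* v$3, u$1* v$2 - u$2* v$1]"

lemma cross_orth1: "cinner u (cvec (crossc u v)) = 0"
  by (simp add: cinner_def sum_3 cvec_def crossc_def) algebra
lemma cross_orth2: "cinner v (cvec (crossc u v)) = 0"
  by (simp add: cinner_def sum_3 cvec_def crossc_def) algebra
lemma cross_norm: "cinner (cvec (crossc u v)) (cvec (crossc u v)) =
   cinner u u * cinner v v - cinner u v * cinner v u"
  by (simp add: cinner_def sum_3 cvec_def crossc_def) algebra

definition f3 :: "complex^3 \<Rightarrow> complex^3 \<Rightarrow> complex^3 \<Rightarrow> 3 \<Rightarrow> complex^3" where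
  "f3 u v w k = (if k = 1 then u else if k = 2 then v else w)"

lemma f3_simps[simp]: "f3 u v w 1 = u" "f3 u v w 2 = v" "f3 u v w 3 = w"
  by (simp_all add: f3_def)

lemma orthonormal3:
  assumes "cinner u u = 1" "cinner v v = 1" "cinner w w = 1"
    "cinner u v = 0" "cinner u w = 0" "cinner v w = 0"
  shows "orthonormal (f3 u v w)"
proof -
  have c: "cinner v u = 0" "cinner w u = 0" "cinner w v = 0"
    using assms cinner_conj by (metis complex_cnj_zero)+
  show ?thesis unfolding orthonormal_def
    using assms c by (auto simp: forall_3)
qed

lemma complete2:
  assumes "cinner u u = 1" "cinner v v = 1" "cinner u v = 0"
  shows "orthonormal (f3 u v (cvec (crossc u v)))"
proof -
  have "cinner v u = 0" using assms cinner_conj by (metis complex_cnj_zero)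
  thus ?thesis
    apply (intro orthonormal3)
    using assms cross_orth1 cross_orth2 cross_norm by (auto)
qed

lemma complete1:
  fixes u :: "complex^3"
  assumes u: "cinner u u = 1"
  shows "\<exists>v. cinner v v = 1 \<and> cinner u v = 0"
proof (cases "u$1 = 0 \<and> u$2 = 0")
  case True
  show ?thesis
    by (rule exI[of _ "axis 1 1"]) (use True in \<open>simp add: cinner_def sum_3 axis_def\<close>)
next
  case False
  define v0 where "v0 = (vector [- cnj (u$2), cnj (u$1), 0] :: complex^3)"
  have nz: "v0 \<noteq> 0" using False by (auto simp: v0_def vec_eq_iff forall_3)
  have o: "cinner u v0 = 0" by (simp add: v0_def cinner_def sum_3)
  define v where "v = complex_of_real (1 / norm v0) *s v0"
  have "cinner v v = 1" unfolding v_def using normalize[OF nz] .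
  moreover have "cinner u v = 0" unfolding v_def cinner_scale_right o by simp
  ultimately show ?thesis by blast
qed

lemma complete1':
  fixes u :: "complex^3"
  assumes u: "cinner u u = 1"
  shows "\<exists>f. orthonormal f \<and> f 1 = u"
proof -
  obtain v where v: "cinner v v = 1" "cinner u v = 0" using complete1[OF u] by blast
  show ?thesis using complete2[OF u v] by (intro exI[of _ "f3 u v _"]) simp
qed



lemma eigen_exists:
  fixes A :: "complex^3^3"
  shows "\<exists>m v. v \<noteq> 0 \<and> A *v v = m *s v"
proof -
  define c2 where "c2 = A$1$1 + A$2$2 + A$3$3"
  define c1 where "c1 = - (A$1$1*A$2$2 + A$1$1*A$3$3 + A$2$2*A$3$3) + A$1$2*A$2$1 + A$1$3*A$3$1 + A$2$3*A$3$2"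
  define p where "p = [: det A, c1, c2, -1 :]"
  have dp: "det (A - mat m) = poly p m" for m
    by (simp add: det_3 p_def c1_def c2_def mat_def) algebra
  have "\<not> (\<exists>a l. a \<noteq> 0 \<and> l = 0 \<and> p = pCons a l)"
    by (simp add: p_def)
  then obtain m where "poly p m = 0" using fundamental_theorem_of_algebra_alt by blast
  hence "det (A - mat m) = 0" using dp by simp
  hence "\<not> invertible (A - mat m)" using invertible_det_nz by blast
  hence "\<not> (\<exists>B. B ** (A - mat m) = mat 1)" using invertible_left_inverse by blast
  then obtain v where v: "(A - mat m) *v v = 0" "v \<noteq> 0"
    using matrix_left_invertible_ker by blast
  have "(A - mat m) *v v = A *v v - m *s v"
    by (simp add: vec_eq_iff matrix_vector_mult_def mat_def left_diff_distrib sum_subtractf ifm1)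
  thus ?thesis using v by (intro exI[of _ m] exI[of _ v]) simp
qed



lemma eig_perp:
  assumes U: "adjoint_mat U ** U = mat 1" and e: "U *v g = l *s g" and g: "cinner g g = 1"
    and x: "cinner x g = 0"
  shows "cinner (U *v x) g = 0"
proof -
  have l: "l * cnj l = 1" using eig_abs[OF U g e] .
  have "cinner (U *v x) (U *v g) = 0" using unitary_cinner[OF U] x by simp
  hence "cnj l * cinner (U *v x) g = 0" unfolding e cinner_scale_right .
  thus ?thesis using l by auto
qed

lemma scale_comm: "(a::complex) *s (b *s x) = b *s (a *s x)"
  by (simp add: vec_eq_iff mult_ac)

lemma norm_eig:
  assumes "v \<noteq> 0" "U *v v = m *s v"
  shows "cinner (complex_of_real (1 / norm v) *s v) (complex_of_real (1 / norm v) *s v) = 1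
    \<and> U *v (complex_of_real (1 / norm v) *s v) = m *s (complex_of_real (1 / norm v) *s v)"
  using normalize[OF assms(1)] assms(2) by (simp add: mv_scale scale_comm)

lemma spectral3:
  fixes U :: "complex^3^3"
  assumes U: "adjoint_mat U ** U = mat 1"
  shows "\<exists>f l. orthonormal f \<and> (\<forall>k. U *v f k = l k *s f k)"
proof -
  obtain m v where v: "v \<noteq> 0" "U *v v = m *s v" using eigen_exists by blast
  define g1 where "g1 = complex_of_real (1 / norm v) *s v"
  have g1: "cinner g1 g1 = 1" "U *v g1 = m *s g1" using norm_eig[OF v] g1_def by auto
  obtain h where h: "orthonormal h" "h 1 = g1" using complete1'[OF g1(1)] by blast
  define p where "p = h 2"
  define q where "q = h 3"
  have ho: "cinner p p = 1" "cinner q q = 1" "cinner p q = 0" "cinner q p = 0"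
     "cinner p g1 = 0" "cinner q g1 = 0"
    using h unfolding orthonormal_def p_def q_def by (auto dest: spec[of _ 1] spec[of _ 2] spec[of _ 3])
  have exp3: "x = cinner x g1 *s g1 + cinner x p *s p + cinner x q *s q" for x
    using expand[OF h(1), of x] by (simp add: sum_3 h(2) p_def q_def)
  define m11 where "m11 = cinner (U *v p) p"
  define m21 where "m21 = cinner (U *v p) q"
  define m12 where "m12 = cinner (U *v q) p"
  define m22 where "m22 = cinner (U *v q) q"
  have Up: "U *v p = m11 *s p + m21 *s q"
    using exp3[of "U *v p"] eig_perp[OF U g1(2) g1(1) ho(5)] by (simp add: m11_def m21_def)
  have Uq: "U *v q = m12 *s p + m22 *s q"
    using exp3[of "U *v q"] eig_perp[OF U g1(2) g1(1) ho(6)] by (simp add: m12_def m22_def)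
  have "\<exists>mu y. cinner y y = 1 \<and> cinner y g1 = 0 \<and> U *v y = mu *s y"
  proof (cases "m12 = 0")
    case True
    thus ?thesis using ho Uq by (intro exI[of _ m22] exI[of _ q]) simp
  next
    case False
    define qp where "qp = [: m11*m22 - m12*m21, -(m11+m22), 1 :]"
    have "\<not> (\<exists>a l. a \<noteq> 0 \<and> l = 0 \<and> qp = pCons a l)" by (simp add: qp_def)
    then obtain mu where "poly qp mu = 0" using fundamental_theorem_of_algebra_alt by blast
    hence quad: "m11*m22 - m12*m21 - (m11+m22) * mu + mu*mu = 0"
      by (simp add: qp_def algebra_simps)
    define y0 where "y0 = m12 *s p + (mu - m11) *s q"
    have "U *v y0 = m12 *s (U *v p) + (mu - m11) *s (U *v q)"
      by (simp add: y0_def matrix_vector_right_distrib mv_scale matrix_vector_mult_diff_distrib)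
    also have "\<dots> = mu *s y0"
    proof -
      have "m12 * (m11 * p$i + m21 * q$i) + (mu - m11) * (m12 * p$i + m22 * q$i)
          - mu * (m12 * p$i + (mu - m11) * q$i)
          = - q$i * (m11*m22 - m12*m21 - (m11+m22) * mu + mu*mu)" for i
        by (simp add: algebra_simps)
      hence "m12 * (m11 * p$i + m21 * q$i) + (mu - m11) * (m12 * p$i + m22 * q$i)
          = mu * (m12 * p$i + (mu - m11) * q$i)" for i
        using quad by simp
      hence "\<forall>i. (m12 *s (m11 *s p + m21 *s q) + (mu - m11) *s (m12 *s p + m22 *s q))$i
             = (mu *s (m12 *s p + (mu - m11) *s q))$i" by (simp add: algebra_simps)
      thus ?thesis unfolding Up Uq y0_def vec_eq_iff .
    qed
    finally have ey: "U *v y0 = mu *s y0" .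
    have "cinner y0 p = m12" using ho by (simp add: y0_def cinner_simps)
    hence nz: "y0 \<noteq> 0" using False by auto
    have o: "cinner y0 g1 = 0" using ho by (simp add: y0_def cinner_simps)
    define y where "y = complex_of_real (1 / norm y0) *s y0"
    have "cinner y g1 = 0" unfolding y_def cinner_scale_left o by simp
    thus ?thesis using norm_eig[OF nz ey] y_def by blast
  qed
  then obtain mu g2 where g2: "cinner g2 g2 = 1" "cinner g2 g1 = 0" "U *v g2 = mu *s g2" by blast
  have g12: "cinner g1 g2 = 0" using g2(2) cinner_conj by (metis complex_cnj_zero)
  define g3 where "g3 = cvec (crossc g1 g2)"
  have f: "orthonormal (f3 g1 g2 g3)" unfolding g3_def by (rule complete2[OF g1(1) g2(1) g12])
  have ff: "\<And>j k. cinner (f3 g1 g2 g3 k) (f3 g1 g2 g3 j) = (if j = k then 1 else 0)"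
    using f unfolding orthonormal_def by blast
  have g3o: "cinner g3 g1 = 0" "cinner g3 g2 = 0" "cinner g3 g3 = 1"
    using ff[of 3 1] ff[of 3 2] ff[of 3 3] by simp_all
  have "U *v g3 = cinner (U *v g3) g3 *s g3"
    using expand[OF f, of "U *v g3"] eig_perp[OF U g1(2) g1(1) g3o(1)] eig_perp[OF U g2(3) g2(1) g3o(2)]
    by (simp add: sum_3)
  hence "\<forall>k. U *v f3 g1 g2 g3 k = (if k = 1 then m else if k = 2 then mu else cinner (U *v g3) g3) *s f3 g1 g2 g3 k"
    using g1 g2 by (auto simp: forall_3)
  with f show ?thesis
    by (intro exI[of _ "f3 g1 g2 g3"] exI[of _ "\<lambda>k. if k = 1 then m else if k = 2 then mu else cinner (U *v g3) g3"]) simp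
qed



lemma adj_outer: "adjoint_mat (outer u v) = outer v u"
  by (simp add: adjoint_mat_def outer_def vec_eq_iff)
lemma adj_diff: "adjoint_mat (A - B) = adjoint_mat A - adjoint_mat B"
  by (simp add: adjoint_mat_def vec_eq_iff)
lemma zero_mat: "(\<And>x. (A::complex^'n^'m) *v x = 0) \<Longrightarrow> A = 0"
  by (subst matrix_eq) simp

lemma proj_nonzero:
  fixes P :: "complex^'n^'n"
  assumes PP: "P ** P = P" and nz: "P \<noteq> 0"
  shows "\<exists>c. cinner c c = 1 \<and> P *v c = c"
proof -
  obtain x where x: "P *v x \<noteq> 0" using nz zero_mat by blast
  have e: "P *v (P *v x) = 1 *s (P *v x)" by (simp add: matrix_vector_mul_assoc PP)
  show ?thesis using norm_eig[OF x e] by auto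
qed

lemma proj_orth:
  assumes PH: "adjoint_mat P = P" and c: "P *v c = c" and x: "P *v x = 0"
  shows "cinner c x = 0"
proof -
  have "cinner c x = cinner (P *v c) x" using c by simp
  also have "\<dots> = cinner c (P *v x)" using PH by (simp add: cinner_adj)
  finally show ?thesis using x by simp
qed

lemma peel:
  fixes P :: "complex^'n^'n"
  assumes PP: "P ** P = P" and PH: "adjoint_mat P = P" and c: "P *v c = c" and cc: "cinner c c = 1"
  shows "(P - outer c c) ** (P - outer c c) = P - outer c c"
    "adjoint_mat (P - outer c c) = P - outer c c" "(P - outer c c) *v c = 0"
proof -
  show "adjoint_mat (P - outer c c) = P - outer c c" using PH by (simp add: adj_diff adj_outer)
  show c0: "(P - outer c c) *v c = 0" using c cc by (simp add: matrix_vector_mult_diff_rdistrib outer_mv)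
  have Pc: "cinner (P *v x) c = cinner x c" for x
    using c PH by (metis cinner_adj)
  show "(P - outer c c) ** (P - outer c c) = P - outer c c"
  proof (subst matrix_eq, intro allI)
    fix x
    have "P *v (P *v x) = P *v x" by (simp add: matrix_vector_mul_assoc PP)
    thus "(P - outer c c) ** (P - outer c c) *v x = (P - outer c c) *v x"
      using c cc Pc
      by (simp add: matrix_vector_mul_assoc[symmetric] matrix_vector_mult_diff_rdistrib
          matrix_vector_mult_diff_distrib outer_mv mv_scale cinner_simps)
  qed
qed

lemma adj_cols_mv: "(adjoint_mat (cols f) *v x)$k = cinner x (f k)"
  by (simp add: adjoint_mat_def cols_def matrix_vector_mult_def cinner_def mult_ac)

lemma TP_facts:
  fixes T :: "complex^'n^'n"
  defines "P \<equiv> adjoint_mat T ** T"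
  assumes PP: "P ** P = P"
  shows "\<And>x y. cinner (T *v x) (T *v y) = cinner x (P *v y)"
    "\<And>x. P *v x = 0 \<Longrightarrow> T *v x = 0" "T ** P = T"
proof -
  show ti: "cinner (T *v x) (T *v y) = cinner x (P *v y)" for x y
    by (simp add: P_def cinner_adj matrix_vector_mul_assoc)
  show tz: "T *v x = 0" if "P *v x = 0" for x
  proof -
    have "cinner (T *v x) (T *v x) = 0" using ti that by simp
    thus ?thesis by (rule cinner_self_eq_0)
  qed
  show "T ** P = T"
  proof (subst matrix_eq, intro allI)
    fix x
    have "P *v (x - P *v x) = 0"
      by (simp add: matrix_vector_mult_diff_distrib matrix_vector_mul_assoc PP)
    hence "T *v (x - P *v x) = 0" by (rule tz)
    thus "T ** P *v x = T *v x"
      by (simp add: matrix_vector_mult_diff_distrib matrix_vector_mul_assoc[symmetric])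
  qed
qed



lemma outer_mv_c: "outer u v *v x = cinner x v *s u" by (rule outer_mv)

lemma adj_mat1[simp]: "adjoint_mat (mat 1 :: complex^'n^'n) = mat 1"
  by (simp add: adjoint_mat_def mat_def vec_eq_iff)

lemma unitary_from_bases:
  fixes c d :: "complex^'n"
  assumes f1: "orthonormal f1" and f2: "orthonormal f2" and k: "f1 k = c" "f2 k = d"
  shows "\<exists>U. adjoint_mat U ** U = mat 1 \<and> U *v c = d"
proof -
  define U where "U = cols f2 ** adjoint_mat (cols f1)"
  have u1: "adjoint_mat (cols f1) ** cols f1 = mat 1" using orthonormal_unitary[OF f1] .
  have u1': "cols f1 ** adjoint_mat (cols f1) = mat 1" using unitary_right[OF u1] .
  have u2: "adjoint_mat (cols f2) ** cols f2 = mat 1" using orthonormal_unitary[OF f2] .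
  have "adjoint_mat U ** U = cols f1 ** (adjoint_mat (cols f2) ** cols f2) ** adjoint_mat (cols f1)"
    unfolding U_def adjoint_mult by (simp add: matrix_mul_assoc)
  also have "\<dots> = mat 1" using u2 u1' by simp
  finally have UU: "adjoint_mat U ** U = mat 1" .
  have ci: "cinner c (f1 i) = (if i = k then 1 else 0)" for i
    using f1 unfolding orthonormal_def k(1)[symmetric] by simp
  have "adjoint_mat (cols f1) *v c = axis k 1"
    by (simp add: vec_eq_iff adj_cols_mv axis_def ci)
  hence "U *v c = d" unfolding U_def by (simp add: matrix_vector_mul_assoc[symmetric] cols_mv_axis k)
  with UU show ?thesis by blast
qed

lemma decomp:
  fixes T :: "complex^3^3"
  assumes pi: "partial_isometry T"
  shows "\<exists>U a. adjoint_mat U ** U = mat 1 \<and> cinner a a = 1 \<and>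
     (T = 0 \<or> T = U \<or> T = U ** (mat 1 - outer a a) \<or> T = U ** outer a a)"
proof -
  define P where "P = adjoint_mat T ** T"
  have PP: "P ** P = P" and PH: "adjoint_mat P = P"
    using pi unfolding partial_isometry_def orthogonal_projection_mat_def P_def by auto
  note TF = TP_facts[of T, folded P_def, OF PP]
  have a0: "cinner (axis 1 1) (axis 1 1 :: complex^3) = 1"
    by (simp add: cinner_def sum_3 axis_def)
  show ?thesis
  proof (cases "P = 0")
    case True
    hence "T = 0" using TF(3) by simp
    thus ?thesis using a0 by (intro exI[of _ "mat 1"] exI[of _ "axis 1 1"]) simp
  next
    case P0: False
    obtain c1 where c1: "cinner c1 c1 = 1" "P *v c1 = c1" using proj_nonzero[OF PP P0] by blast
    define P1 where "P1 = P - outer c1 c1"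
    note pe1 = peel[OF PP PH c1(2) c1(1), folded P1_def]
    show ?thesis
    proof (cases "P1 = 0")
      case True
      hence Pe: "P = outer c1 c1" unfolding P1_def by simp
      define d where "d = T *v c1"
      have dd: "cinner d d = 1" unfolding d_def TF(1) c1(2) c1(1) ..
      obtain f1 where f1: "orthonormal f1" "f1 1 = c1" using complete1'[OF c1(1)] by blast
      obtain f2 where f2: "orthonormal f2" "f2 1 = d" using complete1'[OF dd] by blast
      obtain U where U: "adjoint_mat U ** U = mat 1" "U *v c1 = d"
        using unitary_from_bases[OF f1(1) f2(1) f1(2) f2(2)] by blast
      have "T = T ** outer c1 c1" using TF(3) Pe by simp
      also have "\<dots> = U ** outer c1 c1" unfolding mult_outer U(2) d_def ..
      finally show ?thesis using U c1 by blast
    next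
      case P10: False
      obtain c2 where c2: "cinner c2 c2 = 1" "P1 *v c2 = c2" using proj_nonzero[OF pe1(1) P10] by blast
      have c21: "cinner c2 c1 = 0" using proj_orth[OF pe1(2) c2(2) pe1(3)] .
      have c12: "cinner c1 c2 = 0" using c21 cinner_conj by (metis complex_cnj_zero)
      define P2 where "P2 = P1 - outer c2 c2"
      note pe2 = peel[OF pe1(1) pe1(2) c2(2) c2(1), folded P2_def]
      have P2c1: "P2 *v c1 = 0"
        unfolding P2_def using pe1(3) c12 by (simp add: matrix_vector_mult_diff_rdistrib outer_mv)
      have Pc2: "P *v c2 = c2"
        using c2(2) c21 unfolding P1_def by (simp add: matrix_vector_mult_diff_rdistrib outer_mv)
      show ?thesis
      proof (cases "P2 = 0")
        case True
        hence Pe: "P = outer c1 c1 + outer c2 c2" unfolding P2_def P1_def by (simp add: algebra_simps)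
        define c3 where "c3 = cvec (crossc c1 c2)"
        have f: "orthonormal (f3 c1 c2 c3)" unfolding c3_def by (rule complete2[OF c1(1) c2(1) c12])
        have ff: "\<And>j k. cinner (f3 c1 c2 c3 k) (f3 c1 c2 c3 j) = (if j = k then 1 else 0)"
          using f unfolding orthonormal_def by blast
        have c3o: "cinner c3 c1 = 0" "cinner c3 c2 = 0" "cinner c3 c3 = 1" "cinner c1 c3 = 0"
          "cinner c2 c3 = 0"
          using ff[of 3 1] ff[of 3 2] ff[of 3 3] ff[of 1 3] ff[of 2 3] by simp_all
        have Px: "P *v x = x - cinner x c3 *s c3" for x
          using expand[OF f, of x] unfolding Pe by (simp add: sum_3 outer_mv matrix_vector_mult_add_rdistrib) (metis add_diff_cancel_right')
        define e1 where "e1 = T *v c1"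
        define e2 where "e2 = T *v c2"
        have eo: "cinner e1 e1 = 1" "cinner e2 e2 = 1" "cinner e1 e2 = 0"
          unfolding e1_def e2_def TF(1) Px using c1 c2 c3o c12 by (simp_all add: cinner_simps)
        define b where "b = cvec (crossc e1 e2)"
        have fb: "orthonormal (f3 e1 e2 b)" unfolding b_def by (rule complete2[OF eo])
        have ffb: "\<And>j k. cinner (f3 e1 e2 b k) (f3 e1 e2 b j) = (if j = k then 1 else 0)"
          using fb unfolding orthonormal_def by blast
        have bo: "cinner e1 b = 0" "cinner e2 b = 0" "cinner b b = 1"
          using ffb[of 1 3] ffb[of 2 3] ffb[of 3 3] by simp_all
        have Tc3: "T *v c3 = 0" using TF(2)[of c3] Px c3o by simp
        have Ty: "T *v y = cinner y c1 *s e1 + cinner y c2 *s e2" for y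
        proof -
          have "T *v y = T *v (P *v y)" using TF(3) by (simp add: matrix_vector_mul_assoc)
          thus ?thesis unfolding Pe e1_def e2_def
            by (simp add: matrix_vector_mult_add_rdistrib outer_mv matrix_vector_right_distrib mv_scale)
        qed
        have Tyb: "cinner (T *v y) b = 0" for y unfolding Ty using bo by (simp add: cinner_simps)
        have Tb: "adjoint_mat T *v b = 0"
        proof -
          have "cinner (adjoint_mat T *v b) (adjoint_mat T *v b) = 0"
            using Tyb[of "adjoint_mat T *v b"] by (simp add: cinner_adj)
          thus ?thesis by (rule cinner_self_eq_0)
        qed
        define U where "U = T + outer b c3"
        have Ux: "U *v x = T *v x + cinner x c3 *s b" for x
          unfolding U_def by (simp add: matrix_vector_mult_add_rdistrib outer_mv)
        have aU: "adjoint_mat U = adjoint_mat T + outer c3 b"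
          unfolding U_def by (simp add: adjoint_mat_def outer_def vec_eq_iff)
        have UU: "adjoint_mat U ** U = mat 1"
        proof (subst matrix_eq, intro allI)
          fix x
          have "adjoint_mat T *v (T *v x) = P *v x" by (simp add: P_def matrix_vector_mul_assoc)
          thus "adjoint_mat U ** U *v x = mat 1 *v x"
            unfolding matrix_vector_mul_assoc[symmetric] Ux aU
            using Tb Tyb[of x] bo Px[of x]
            by (simp add: matrix_vector_mult_add_rdistrib matrix_vector_right_distrib mv_scale outer_mv
                cinner_simps)
        qed
        have "T = U ** (mat 1 - outer c3 c3)"
        proof (subst matrix_eq, intro allI)
          fix x
          show "T *v x = U ** (mat 1 - outer c3 c3) *v x"
            unfolding matrix_vector_mul_assoc[symmetric] Ux
            using Tc3 c3o bo
            by (simp add: matrix_vector_mult_diff_rdistrib outer_mv matrix_vector_mult_diff_distrib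
                mv_scale cinner_simps)
        qed
        thus ?thesis using UU c3o by blast
      next
        case P20: False
        obtain c3 where c3: "cinner c3 c3 = 1" "P2 *v c3 = c3" using proj_nonzero[OF pe2(1) P20] by blast
        have c32: "cinner c3 c2 = 0" using proj_orth[OF pe2(2) c3(2) pe2(3)] .
        have c31: "cinner c3 c1 = 0" using proj_orth[OF pe2(2) c3(2) P2c1] .
        have c23: "cinner c2 c3 = 0" "cinner c1 c3 = 0" using c32 c31 cinner_conj by (metis complex_cnj_zero)+
        have f: "orthonormal (f3 c1 c2 c3)"
          by (rule orthonormal3) (use c1 c2 c3 c12 c23 in auto)
        have Pc3: "P *v c3 = c3"
          using c3(2) c32 c31 unfolding P2_def P1_def by (simp add: matrix_vector_mult_diff_rdistrib outer_mv)
        have "P = mat 1"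
          by (rule mat_eq_basis[OF f]) (use c1 Pc2 Pc3 in \<open>auto simp: f3_def\<close>)
        hence "adjoint_mat T ** T = mat 1" unfolding P_def .
        thus ?thesis using c1 by blast
      qed
    qed
  qed
qed



lemma mult_outerT: "A ** outerT u v = outerT (A *v u) v"
  by (simp add: outerT_def vec_eq_iff matrix_vector_mult_def matrix_matrix_mult_def sum_distrib_right sum_distrib_left mult_ac)
lemma mat_sub_ldistrib: "(A::complex^'n^'m) ** (B - C) = A ** B - A ** C"
  by (simp add: vec_eq_iff matrix_matrix_mult_def sum_subtractf algebra_simps)
lemma mat_sub_rdistrib: "((B::complex^'n^'m) - C) ** A = B ** A - C ** A"
  by (simp add: vec_eq_iff matrix_matrix_mult_def sum_subtractf algebra_simps)
lemma transpose_diff': "transpose ((A::complex^'n^'m) - B) = transpose A - transpose B"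
  by (simp add: transpose_def vec_eq_iff)
lemma transpose_zero': "transpose (0::complex^'n^'m) = 0"
  by (simp add: transpose_def vec_eq_iff)

lemma main3:
  fixes T :: "complex^3^3"
  assumes pi: "partial_isometry T"
  shows "\<exists>W. W ** adjoint_mat W = mat 1 \<and> transpose W = W \<and> transpose (T ** W) = T ** W"
proof -
  obtain U a where Ua: "adjoint_mat U ** U = mat 1" "cinner a a = 1"
    "T = 0 \<or> T = U \<or> T = U ** (mat 1 - outer a a) \<or> T = U ** outer a a"
    using decomp[OF pi] by blast
  obtain f l where fl: "orthonormal f" "\<forall>k. U *v f k = l k *s f k" using spectral3[OF Ua(1)] by blast
  obtain W where W: "W ** adjoint_mat W = mat 1" "transpose W = W" "transpose (U ** W) = U ** W"
    "W *v cvec a = U *v a"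
    using W_lemma[OF Ua(1) fl(1), of l a] fl(2) by blast
  have oW: "outer a a ** W = outerT a (U *v a)" unfolding outer_W[OF W(2)] W(4) ..
  have "transpose (T ** W) = T ** W"
    using Ua(3)
  proof (elim disjE)
    assume "T = 0" thus ?thesis by (simp add: transpose_zero')
  next
    assume "T = U" thus ?thesis using W(3) by simp
  next
    assume T: "T = U ** (mat 1 - outer a a)"
    have "T ** W = U ** W - outerT (U *v a) (U *v a)"
      unfolding T by (simp add: matrix_mul_assoc[symmetric] mat_sub_rdistrib mat_sub_ldistrib oW mult_outerT)
    thus ?thesis using W(3) by (simp add: transpose_diff' outerT_sym)
  next
    assume T: "T = U ** outer a a"
    have "T ** W = outerT (U *v a) (U *v a)"
      unfolding T by (simp add: matrix_mul_assoc[symmetric] oW mult_outerT)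
    thus ?thesis by (simp add: outerT_sym)
  qed
  thus ?thesis using W by blast
qed



definition pm :: "('a \<Rightarrow> 'n) \<Rightarrow> complex^'n^'n \<Rightarrow> complex^'a^'a" where
  "pm g A = (\<chi> i j. A $ g i $ g j)"

lemma pm_mult:
  assumes g: "bij (g :: 'a::finite \<Rightarrow> 'n::finite)"
  shows "pm g (A ** B) = pm g A ** pm g B"
proof -
  have "(\<Sum>k\<in>UNIV. A $ g i $ g k * B $ g k $ g j) = (\<Sum>k\<in>UNIV. A $ g i $ k * B $ k $ g j)" for i j
    using sum.reindex_bij_betw[OF g, of "\<lambda>k. A $ g i $ k * B $ k $ g j"] .
  thus ?thesis by (simp add: pm_def matrix_matrix_mult_def vec_eq_iff)
qed
lemma pm_adj: "pm g (adjoint_mat A) = adjoint_mat (pm g A)"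
  by (simp add: pm_def adjoint_mat_def vec_eq_iff)
lemma pm_transpose: "pm g (transpose A) = transpose (pm g A)"
  by (simp add: pm_def transpose_def vec_eq_iff)
lemma pm_mat1: "inj g \<Longrightarrow> pm g (mat 1) = mat 1"
  by (simp add: pm_def mat_def vec_eq_iff inj_eq)
lemma pm_inj:
  assumes g: "bij g" and e: "pm g A = pm g B"
  shows "A = B"
proof -
  have "A $ g i $ g j = B $ g i $ g j" for i j using e by (simp add: pm_def vec_eq_iff)
  hence "A $ g (inv g x) $ g (inv g y) = B $ g (inv g x) $ g (inv g y)" for x y by blast
  hence "A $ x $ y = B $ x $ y" for x y
    by (simp add: surj_f_inv_f[OF bij_is_surj[OF g]])
  thus ?thesis by (simp add: vec_eq_iff)
qed
lemma pm_surj: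
  assumes g: "bij g"
  shows "\<exists>A. pm g A = B"
proof -
  define h where "h = inv g"
  have hg: "h (g i) = i" for i using g unfolding h_def by (simp add: bij_is_inj)
  show ?thesis by (rule exI[of _ "\<chi> x y. B $ h x $ h y"]) (simp add: pm_def hg vec_eq_iff)
qed

lemma pi_transfer:
  assumes g: "bij g" and pi: "partial_isometry T"
  shows "partial_isometry (pm g T)"
proof -
  define P where "P = adjoint_mat T ** T"
  have P: "P ** P = P" "adjoint_mat P = P"
    using pi unfolding partial_isometry_def orthogonal_projection_mat_def P_def by auto
  have e: "adjoint_mat (pm g T) ** pm g T = pm g P"
    unfolding P_def pm_mult[OF g] pm_adj ..
  have "pm g P ** pm g P = pm g P" using P(1) pm_mult[OF g, of P P] by simp
  moreover have "adjoint_mat (pm g P) = pm g P" using P(2) pm_adj[of g P] by simp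
  ultimately show ?thesis unfolding partial_isometry_def orthogonal_projection_mat_def e by simp
qed



theorem corollary5p2:
  fixes T :: "complex ^ 'n ^ 'n"
  assumes "CARD('n) = 3"
    and "partial_isometry T"
  shows "complex_symmetric T"
proof -
  have "card (UNIV :: 3 set) = card (UNIV :: 'n set)" using assms(1) by simp
  then obtain g :: "3 \<Rightarrow> 'n" where g: "bij_betw g UNIV UNIV"
    using finite_same_card_bij[of "UNIV :: 3 set" "UNIV :: 'n set"] by auto
  have gb: "bij g" using g by simp
  obtain W3 where W3: "W3 ** adjoint_mat W3 = mat 1" "transpose W3 = W3"
    "transpose (pm g T ** W3) = pm g T ** W3"
    using main3[OF pi_transfer[OF gb assms(2)]] by blast
  obtain W where W: "pm g W = W3" using pm_surj[OF gb] by blast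
  have "pm g (W ** adjoint_mat W) = pm g (mat 1)"
    using W3(1) by (simp add: pm_mult[OF gb] pm_adj pm_mat1[OF bij_is_inj[OF gb]] W)
  hence 1: "W ** adjoint_mat W = mat 1" by (rule pm_inj[OF gb])
  have "pm g (transpose W) = pm g W" using W3(2) by (simp add: pm_transpose W)
  hence 2: "transpose W = W" by (rule pm_inj[OF gb])
  have "pm g (transpose (T ** W)) = pm g (T ** W)"
    using W3(3) by (simp add: pm_transpose pm_mult[OF gb] W)
  hence 3: "transpose (T ** W) = T ** W" by (rule pm_inj[OF gb])
  show ?thesis by (rule final_W[OF 1 2 3])
qed


end
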